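(* Let $n\ge 1$ and let $\mathcal C\subset M_n(\mathbb{F}_2)$ be an additively closed set of $n\times n$ matrices over $\mathbb{F}_2$ (identified with $\mathbb{F}_2$-linear maps $\mathbb{F}_2^n\to\mathbb{F}_2^n$) such that $|\mathcal C|=2^{2n}$ and $\mathrm{rank}(A)\ge n-1$ for all $0\ne A\in\mathcal C$. Then there exist two presemifields $(\mathbb{F}_2^n,\star)$ and $(\mathbb{F}_2^n,\circ)$ such that \[ \mathcal C=\{x\mapsto a\star x-b\circ x \;:\; a,b\in\mathbb{F}_2^n\}. \] In particular, $\mathcal C$ contains an additively closed set $\mathcal C'$ with $|\mathcal C'|=2^n$ all of whose nonzero elements are invertible.
   Context: A presemifield $(\mathbb{F}_q^n,\circ)$ is the vector space $\mathbb{F}_q^n$ equipped with a multiplication $\circ$ that is biadditive (distributive on both sides, not necessarily associative, no identity required) and has no zero divisors: $x\circ y=0$ implies $x=0$ or $y=0$. Equivalently, it is a finite-dimensional (not necessarily associative) division algebra over a finite field. For a presemifield, the set $\{x\mapsto x\circ y: y\in\mathbb{F}_q^n\}$ is an additive set of $q^n$ matrices in $M_n(\mathbb{F}_q)$ all of whose nonzero elements are invertible (a semifield spread set). In the terminology of rank-metric codes, $\mathcal C$ in the claim is an additive maximum rank distance (MRD) code with minimum distance $n-1$. *)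

theory Defs
  imports "HOL-Analysis.Analysis"
begin

definition presemifield :: "('v::ab_group_add \<Rightarrow> 'v \<Rightarrow> 'v) \<Rightarrow> bool" where
  "presemifield m \<longleftrightarrow>
     (\<forall>x y z. m (x + y) z = m x z + m y z) \<and>
     (\<forall>x y z. m x (y + z) = m x y + m x z) \<and>
     (\<forall>x y. m x y = 0 \<longrightarrow> x = 0 \<or> y = 0)"

definition additively_closed :: "'a::plus set \<Rightarrow> bool" where
  "additively_closed S \<longleftrightarrow> (\<forall>A\<in>S. \<forall>B\<in>S. A + B \<in> S)"

end

theory Submission
  imports Defs
begin


lemma f2_cases:
  assumes "CARD('f::field) = 2"
  shows "(x::'f) = 0 \<or> x = 1"
proof -
  have fin: "finite (UNIV::'f set)" using assms card.infinite by fastforce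
  have "{0,1} \<subseteq> (UNIV::'f set)" by simp
  moreover have "card {0::'f,1} = 2" by simp
  ultimately have "(UNIV::'f set) = {0,1}"
    using card_subset_eq[OF fin] assms by metis
  then show ?thesis by auto
qed

lemma f2_add_self:
  assumes "CARD('f::field) = 2"
  shows "(x::'f) + x = 0"
proof -
  have "(1::'f) + 1 = 0"
  proof -
    have "(1::'f) + 1 = 0 \<or> (1::'f) + 1 = 1" using f2_cases[OF assms] by blast
    moreover have "(1::'f) + 1 \<noteq> 1" by (metis add_cancel_right_right one_neq_zero)
    ultimately show ?thesis by blast
  qed
  then show ?thesis using f2_cases[OF assms, of x] by auto
qed

lemma vec_add_self:
  assumes "\<And>a::'a::ab_group_add. a + a = 0"
  shows "(x::'a^'m) + x = 0"
  by (simp add: vec_eq_iff assms)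

lemma f2_vec_add_self:
  assumes "CARD('f::field) = 2"
  shows "(x::'f^'n) + x = 0"
  by (rule vec_add_self[OF f2_add_self[OF assms]])

lemma f2_mat_add_self:
  assumes "CARD('f::field) = 2"
  shows "(x::'f^'n^'m) + x = 0"
  by (rule vec_add_self[OF f2_vec_add_self[OF assms]])

lemma add_self_minus:
  assumes "\<And>a::'a::ab_group_add. a + a = 0"
  shows "- (x::'a) = x" "y - x = y + x"
proof -
  show "- x = x" using assms[of x] by (metis add_eq_0_iff)
  then show "y - x = y + x" by (metis diff_conv_add_uminus)
qed

definition sp :: "'f::field^'n \<Rightarrow> 'f^'n \<Rightarrow> 'f" where
  "sp r u = (\<Sum>i\<in>UNIV. r$i * u$i)"

lemma sp_add: "sp (r + r') u = sp r u + sp r' u"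
  by (simp add: sp_def distrib_right sum.distrib)
lemma sp_scale: "sp (c *s r) u = c * sp r u"
  by (simp add: sp_def sum_distrib_left mult.assoc)
lemma sp_axis: "sp (axis i 1) u = u$i"
  by (simp add: sp_def axis_def if_distrib[of "\<lambda>x. x * _"] sum.delta cong: if_cong)
lemma sp_row: "sp (row i A) u = (A *v u)$i"
  by (simp add: sp_def row_def matrix_vector_mult_def)

lemma sp_zero[simp]: "sp 0 u = 0"
  by (simp add: sp_def)

lemma f2_exists_p:
  fixes u v :: "'f::field^'n"
  assumes F2: "CARD('f) = 2" and "u \<noteq> 0" "v \<noteq> 0" "u \<noteq> v"
  shows "\<exists>p. sp p u \<noteq> 0 \<and> sp p v = 0"
proof (cases "\<exists>i. u$i \<noteq> 0 \<and> v$i = 0")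
  case True
  then obtain i where "u$i \<noteq> 0" "v$i = 0" by blast
  then show ?thesis by (intro exI[of _ "axis i 1"]) (simp add: sp_axis)
next
  case False
  from assms(4) obtain j where j: "u$j \<noteq> v$j" by (metis vec_eq_iff)
  have c1: "u$j \<noteq> 0 \<longrightarrow> v$j \<noteq> 0" using False by blast
  have uj: "u$j = 0"
  proof (rule ccontr)
    assume "u$j \<noteq> 0"
    then have "v$j \<noteq> 0" using c1 by blast
    then show False using \<open>u$j \<noteq> 0\<close> j f2_cases[OF F2, of "u$j"] f2_cases[OF F2, of "v$j"] by argo
  qed
  have vj: "v$j \<noteq> 0" using uj j by simp
  from assms(2) obtain i where ui: "u$i \<noteq> 0" by (metis vec_eq_iff zero_index)
  with False have vi: "v$i \<noteq> 0" by blast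
  have "i \<noteq> j" using ui uj by auto
  have v1: "v$i = 1" "v$j = 1" using vi vj f2_cases[OF F2] by blast+
  have "sp (axis i 1 + axis j 1) u = u$i" using uj by (simp add: sp_add sp_axis)
  moreover have "sp (axis i 1 + axis j 1) v = 0"
    using v1 f2_add_self[OF F2, of 1] by (simp add: sp_add sp_axis)
  ultimately show ?thesis using ui by metis
qed

lemma rank_two_kernel:
  fixes A :: "'f::field^'n^'n"
  assumes F2: "CARD('f) = 2" and Au: "A *v u = 0" and Av: "A *v v = 0"
    and "u \<noteq> 0" "v \<noteq> 0" "u \<noteq> v"
  shows "rank A + 2 \<le> CARD('n)"
proof -
  define W where "W = {r::'f^'n. sp r u = 0 \<and> sp r v = 0}"
  have subW: "vec.subspace W"
  proof (rule vec.subspaceI)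
    show "0 \<in> W" by (simp add: W_def)
    fix x y assume "x \<in> W" "y \<in> W" thus "x + y \<in> W" by (simp add: W_def sp_add)
  next
    fix c x assume "x \<in> W" thus "c *s x \<in> W" by (simp add: W_def sp_scale)
  qed
  have rowsW: "rows A \<subseteq> W"
  proof
    fix r assume "r \<in> rows A"
    then obtain i where "r = row i A" by (auto simp: rows_def)
    then show "r \<in> W" using Au Av by (simp add: W_def sp_row)
  qed
  obtain p where p: "sp p u \<noteq> 0" "sp p v = 0" using f2_exists_p[OF F2 assms(4-6)] by blast
  from \<open>v \<noteq> 0\<close> obtain j where "v$j \<noteq> 0" by (metis vec_eq_iff zero_index)
  then have q: "sp (axis j 1) v \<noteq> 0" by (simp add: sp_axis)
  define q where "q = (axis j 1 :: 'f^'n)"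
  obtain B where B: "B \<subseteq> W" "vec.independent B" "W \<subseteq> vec.span B" "card B = vec.dim W"
    using vec.basis_exists by blast
  have spanB: "vec.span B = W" using vec.span_subspace[OF B(1) B(3) subW] .
  have pB: "p \<notin> vec.span B" proof
    assume "p \<in> vec.span B" then have "p \<in> W" using spanB by simp
    then show False using p(1) by (simp add: W_def)
  qed
  have ind1: "vec.independent (insert p B)" using vec.independent_insertI[OF pB B(2)] .
  have qB: "q \<notin> vec.span (insert p B)"
  proof
    assume "q \<in> vec.span (insert p B)"
    then obtain k where "q - k *s p \<in> W" unfolding vec.span_insert spanB by blast
    then have "sp (q - k *s p) v = 0" unfolding W_def by blast
    moreover have "sp (q - k *s p) v = sp q v"
    proof -
      have "q - k *s p = q + (-k) *s p" by (simp add: vec_eq_iff)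
      then have "sp (q - k *s p) v = sp q v + (-k) * sp p v" by (simp only: sp_add sp_scale)
      then show ?thesis using p(2) by simp
    qed
    ultimately show False using q q_def by simp
  qed
  have ind2: "vec.independent (insert q (insert p B))" using vec.independent_insertI[OF qB ind1] .
  have finB: "finite B" using vec.independent_bound_general[OF B(2)] by blast
  have "p \<notin> B" using pB vec.span_base by blast
  moreover have "q \<notin> insert p B" using qB vec.span_base by blast
  ultimately have "card (insert q (insert p B)) = card B + 2" using finB by simp
  moreover have "card (insert q (insert p B)) \<le> CARD('n)"
  proof -
    have "card (insert q (insert p B)) \<le> vec.dim (UNIV::('f^'n) set)"
      by (rule vec.independent_card_le_dim[OF _ ind2]) simp
    then show ?thesis by (simp only: vec_dim_card)
  qed
  moreover have "rank A \<le> vec.dim W"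
    unfolding row_rank_def_gen using vec.dim_subset[OF rowsW] .
  ultimately show ?thesis using B(4) by simp
qed



lemma sum_mat_vec: "(\<Sum>A\<in>S. A) *v x = (\<Sum>A\<in>S. A *v x)"
proof (cases "finite S")
  case True
  then show ?thesis
    by (induction S rule: finite_induct) (simp_all add: matrix_vector_mult_add_rdistrib)
qed simp

lemma sum_const_char2:
  assumes "\<And>a::'a::ab_group_add. a + a = 0" and "finite S" and "even (card S)"
  shows "(\<Sum>x\<in>S. (c::'a)) = 0"
proof -
  have "(\<Sum>x\<in>S. c) = (if even (card S) then 0 else c)" using \<open>finite S\<close>
  proof (induction S rule: finite_induct)
    case empty then show ?case by simp
  next
    case (insert x F)
    then show ?case using assms(1)[of c] by (auto simp: add.commute)
  qed
  then show ?thesis using assms(3) by simp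
qed

locale mrd =
  fixes C :: "('f::field ^ 'n ^ 'n) set"
  assumes F2: "CARD('f) = 2"
    and add: "additively_closed C"
    and card: "card C = 2 ^ (2 * CARD('n))"
    and rk: "\<forall>A\<in>C. A \<noteq> 0 \<longrightarrow> rank A \<ge> CARD('n) - 1"
begin

lemma fadd[simp]: "(x::'f) + x = 0" by (rule f2_add_self[OF F2])
lemma vadd[simp]: "(x::'f^'n) + x = 0" by (rule f2_vec_add_self[OF F2])
lemma madd[simp]: "(x::'f^'n^'n) + x = 0" by (rule f2_mat_add_self[OF F2])
lemma vminus: "-(x::'f^'n) = x" "(y::'f^'n) - x = y + x"
  by (metis add_eq_0_iff vadd, metis add_eq_0_iff vadd diff_conv_add_uminus)
lemma mminus: "-(x::'f^'n^'n) = x" "(y::'f^'n^'n) - x = y + x"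
  by (metis add_eq_0_iff madd, metis add_eq_0_iff madd diff_conv_add_uminus)
lemma vcancel: "(x::'f^'n) + y = 0 \<longleftrightarrow> x = y"
  by (metis add_eq_0_iff vminus(1))
lemma mcancel: "(x::'f^'n^'n) + y = 0 \<longleftrightarrow> x = y"
  by (metis add_eq_0_iff mminus(1))
lemma madd_assoc_cancel: "(x::'f^'n^'n) + (x + y) = y" "x + y + x = y" "y + x + x = y"
  by (simp_all add: add.assoc[symmetric] add.commute add.left_commute)
lemma vadd_assoc_cancel: "(x::'f^'n) + (x + y) = y" "x + y + x = y" "y + x + x = y"
  by (simp_all add: add.assoc[symmetric] add.commute add.left_commute)

lemma addC: "A \<in> C \<Longrightarrow> B \<in> C \<Longrightarrow> A + B \<in> C"
  using add unfolding additively_closed_def by blast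

lemma finC: "finite C"
  using card by (metis card.infinite power_not_zero zero_neq_numeral)

lemma zeroC: "0 \<in> C"
proof -
  have "C \<noteq> {}" using card by auto
  then obtain A where "A \<in> C" by blast
  then show ?thesis using addC[of A A] by simp
qed

lemma cardV: "card (UNIV :: ('f^'n) set) = 2 ^ CARD('n)"
  using F2 by simp

lemma finV: "finite (UNIV :: ('f^'n) set)"
  using cardV by (metis card.infinite power_not_zero zero_neq_numeral)

lemma finVV: "finite (UNIV :: (('f^'n) \<times> ('f^'n)) set)"
  using finV by (simp add: finite_Prod_UNIV)

lemma cardM: "card (UNIV :: ('f^'n^'n) set) = 2 ^ (CARD('n) * CARD('n))"
  using F2 by (simp add: power_mult)

lemma finM: "finite (UNIV :: ('f^'n^'n) set)"
  using cardM by (metis card.infinite power_not_zero zero_neq_numeral)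

lemma n2: "CARD('n) \<ge> 2"
proof (rule ccontr)
  assume "\<not> ?thesis"
  then have n1: "CARD('n) = 1" using zero_less_card_finite[where 'a='n] by linarith
  have "card C \<le> card (UNIV :: ('f^'n^'n) set)" by (rule card_mono[OF finM]) auto
  then show False using card cardM n1 by simp
qed

lemma twokill:
  assumes "A \<in> C" "A *v u = 0" "A *v v = 0" "u \<noteq> 0" "v \<noteq> 0" "u \<noteq> v"
  shows "A = 0"
proof (rule ccontr)
  assume "A \<noteq> 0"
  then have "rank A \<ge> CARD('n) - 1" using rk assms(1) by blast
  moreover have "rank A + 2 \<le> CARD('n)" using rank_two_kernel[OF F2 assms(2-6)] .
  ultimately show False using n2 by linarith
qed

lemma other_vec: "\<exists>t::'f^'n. t \<noteq> 0 \<and> t \<noteq> s"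
proof (rule ccontr)
  assume "\<not> ?thesis"
  then have "(UNIV::('f^'n) set) \<subseteq> {0, s}" by blast
  then have "card (UNIV::('f^'n) set) \<le> card {0, s}" by (intro card_mono) auto
  also have "\<dots> \<le> 2" by (simp add: card_insert_le_m1)
  finally have "(2::nat) ^ CARD('n) \<le> 2" using cardV by simp
  moreover have "(2::nat) ^ CARD('n) \<ge> 2 ^ 2" using n2 by (intro power_increasing) auto
  ultimately show False by simp
qed

lemma ev2_bij:
  assumes "s \<noteq> 0" "t \<noteq> 0" "s \<noteq> t"
  shows "bij_betw (\<lambda>A. (A *v s, A *v t)) C UNIV"
proof -
  have inj: "inj_on (\<lambda>A. (A *v s, A *v t)) C"
  proof (rule inj_onI)
    fix A B assume AB: "A \<in> C" "B \<in> C" "(A *v s, A *v t) = (B *v s, B *v t)"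
    have e1: "A *v s = B *v s" "A *v t = B *v t" using AB(3) by simp_all
    have "(A + B) *v s = 0" unfolding matrix_vector_mult_add_rdistrib e1 by (rule vadd)
    moreover have "(A + B) *v t = 0" unfolding matrix_vector_mult_add_rdistrib e1 by (rule vadd)
    ultimately have "A + B = 0" by (rule twokill[OF addC[OF AB(1,2)] _ _ assms])
    then show "A = B" by (simp only: mcancel)
  qed
  have "card (UNIV :: (('f^'n) \<times> ('f^'n)) set) = 2 ^ CARD('n) * 2 ^ CARD('n)"
    by (simp only: UNIV_Times_UNIV[symmetric] card_cartesian_product cardV)
  also have "\<dots> = card C" using card by (simp add: power_add[symmetric] mult_2)
  also have "\<dots> = card ((\<lambda>A. (A *v s, A *v t)) ` C)" using card_image[OF inj] by simp
  finally have "card ((\<lambda>A. (A *v s, A *v t)) ` C) = card (UNIV :: (('f^'n) \<times> ('f^'n)) set)" by simp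
  then have "(\<lambda>A. (A *v s, A *v t)) ` C = UNIV"
    by (intro card_subset_eq finVV) auto
  then show ?thesis using inj by (simp add: bij_betw_def)
qed

lemma ev2_ex1:
  assumes "s \<noteq> 0" "t \<noteq> 0" "s \<noteq> t"
  shows "\<exists>!A. A \<in> C \<and> A *v s = w \<and> A *v t = y"
proof -
  have b: "bij_betw (\<lambda>A. (A *v s, A *v t)) C UNIV" by (rule ev2_bij[OF assms])
  have "(w, y) \<in> (\<lambda>A. (A *v s, A *v t)) ` C" using bij_betw_imp_surj_on[OF b] by simp
  then obtain A where "A \<in> C" "(A *v s, A *v t) = (w, y)" by force
  moreover have "B = A" if "B \<in> C" "B *v s = w" "B *v t = y" for B
  proof -
    have "(B *v s, B *v t) = (A *v s, A *v t)" using that calculation by simp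
    then show ?thesis using inj_onD[OF bij_betw_imp_inj_on[OF b]] that calculation by blast
  qed
  ultimately show ?thesis by auto
qed

definition hole where "hole A \<longleftrightarrow> A \<in> C \<and> (\<forall>x. A *v x = 0 \<longrightarrow> x = 0)"

definition kk where "kk s u w = (THE A. A \<in> C \<and> A *v s = w \<and> A *v u = 0)"

lemma kk:
  assumes "s \<noteq> 0" "u \<noteq> 0" "u \<noteq> s"
  shows "kk s u w \<in> C" "kk s u w *v s = w" "kk s u w *v u = 0"
    and "\<And>A. A \<in> C \<Longrightarrow> A *v s = w \<Longrightarrow> A *v u = 0 \<Longrightarrow> A = kk s u w"
proof -
  have e: "\<exists>!A. A \<in> C \<and> A *v s = w \<and> A *v u = 0" using ev2_ex1 assms by metis
  show "kk s u w \<in> C" "kk s u w *v s = w" "kk s u w *v u = 0"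
    using theI'[OF e] unfolding kk_def by auto
  show "\<And>A. A \<in> C \<Longrightarrow> A *v s = w \<Longrightarrow> A *v u = 0 \<Longrightarrow> A = kk s u w"
    using the1_equality[OF e] unfolding kk_def by auto
qed

lemma kk_add:
  assumes "s \<noteq> 0" "u \<noteq> 0" "u \<noteq> s"
  shows "kk s u (w + w') = kk s u w + kk s u w'"
proof (rule kk(4)[OF assms, symmetric])
  show "kk s u w + kk s u w' \<in> C" by (rule addC[OF kk(1)[OF assms] kk(1)[OF assms]])
  show "(kk s u w + kk s u w') *v s = w + w'"
    unfolding matrix_vector_mult_add_rdistrib kk(2)[OF assms] ..
  show "(kk s u w + kk s u w') *v u = 0"
    unfolding matrix_vector_mult_add_rdistrib kk(3)[OF assms] by simp
qed

definition Us :: "'f^'n \<Rightarrow> ('f^'n) set" where "Us s = {u. u \<noteq> 0 \<and> u \<noteq> s}"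

definition dl where "dl s w = (\<Sum>u\<in>Us s. kk s u w)"

lemma dl_add:
  assumes "s \<noteq> 0"
  shows "dl s (w + w') = dl s w + dl s w'"
proof -
  have "(\<Sum>u\<in>Us s. kk s u (w+w')) = (\<Sum>u\<in>Us s. kk s u w + kk s u w')"
    by (rule sum.cong) (auto simp: Us_def kk_add[OF assms])
  then show ?thesis by (simp add: dl_def sum.distrib)
qed

definition Q where "Q s w = {A \<in> C. A *v s = w}"

lemma Q_bij:
  assumes "s \<noteq> 0" "t \<noteq> 0" "s \<noteq> t"
  shows "bij_betw (\<lambda>A. A *v t) (Q s w) UNIV"
proof -
  have b: "bij_betw (\<lambda>A. (A *v s, A *v t)) C UNIV" by (rule ev2_bij[OF assms])
  show ?thesis unfolding bij_betw_def
  proof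
    show "inj_on (\<lambda>A. A *v t) (Q s w)"
      using bij_betw_imp_inj_on[OF b] unfolding Q_def by (auto simp: inj_on_def)
    show "(\<lambda>A. A *v t) ` Q s w = UNIV"
    proof (rule set_eqI, rule iffI)
      fix y :: "'f^'n"
      have "(w, y) \<in> (\<lambda>A. (A *v s, A *v t)) ` C" using bij_betw_imp_surj_on[OF b] by simp
      then obtain A where "A \<in> C" "(A *v s, A *v t) = (w, y)" by force
      then show "y \<in> (\<lambda>A. A *v t) ` Q s w" unfolding Q_def by force
    qed simp
  qed
qed

lemma card_Q: assumes "s \<noteq> 0" shows "card (Q s w) = 2 ^ CARD('n)"
proof -
  obtain t where "t \<noteq> 0" "t \<noteq> s" using other_vec by blast
  then show ?thesis using bij_betw_same_card[OF Q_bij[OF assms, of t w]] cardV by auto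
qed

lemma finQ: "finite (Q s w)" using finC unfolding Q_def by simp

end



context mrd begin

lemma sum_V: "(\<Sum>y\<in>UNIV. (y::'f^'n)) = 0"
proof (subst vec_eq_iff, rule allI)
  fix i :: 'n
  obtain j :: 'n where ji: "j \<noteq> i"
  proof -
    have "(UNIV::'n set) \<noteq> {i}"
    proof
      assume "(UNIV::'n set) = {i}"
      then have "CARD('n) = 1" by (metis card.empty card_insert_disjoint empty_iff finite.emptyI One_nat_def)
      then show False using n2 by simp
    qed
    then show ?thesis using that by blast
  qed
  define e :: "'f^'n" where "e = axis j 1"
  define A0 where "A0 = {y::'f^'n. y$j = 0}"
  define A1 where "A1 = {y::'f^'n. y$j \<noteq> 0}"
  have ei: "e$i = 0" using ji by (simp add: e_def axis_def)
  have ej: "e$j = 1" by (simp add: e_def)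
  have inj: "inj_on (\<lambda>y. y + e) A0" by (rule inj_onI) simp
  have img: "(\<lambda>y. y + e) ` A0 = A1"
  proof (rule set_eqI, rule iffI)
    fix z assume "z \<in> (\<lambda>y. y + e) ` A0"
    then obtain y where "y \<in> A0" "z = y + e" by blast
    then show "z \<in> A1" using ej by (simp add: A0_def A1_def)
  next
    fix z assume z: "z \<in> A1"
    then have "z$j = 1" using f2_cases[OF F2, of "z$j"] by (simp add: A1_def)
    then have "(z + e)$j = 0" using ej by simp
    moreover have "z = (z + e) + e" by (simp add: add.assoc)
    ultimately show "z \<in> (\<lambda>y. y + e) ` A0" unfolding A0_def by blast
  qed
  have finA0: "finite A0" using finV by (rule finite_subset[rotated]) simp
  have finA1: "finite A1" using finV by (rule finite_subset[rotated]) simp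
  have "(\<Sum>y\<in>A1. y$i) = (\<Sum>y\<in>A0. (y + e)$i)"
    unfolding img[symmetric] by (simp add: sum.reindex[OF inj])
  also have "\<dots> = (\<Sum>y\<in>A0. y$i)" using ei by simp
  finally have s1: "(\<Sum>y\<in>A1. y$i) = (\<Sum>y\<in>A0. y$i)" .
  have "UNIV = A0 \<union> A1" "A0 \<inter> A1 = {}" by (auto simp: A0_def A1_def)
  then have "(\<Sum>y\<in>UNIV. y$i) = (\<Sum>y\<in>A0. y$i) + (\<Sum>y\<in>A1. y$i)"
    using sum.union_disjoint[OF finA0 finA1] by simp
  then show "(\<Sum>y\<in>UNIV. y)$i = (0::'f^'n)$i" using s1 by simp
qed

lemma sum_Q_apply:
  assumes "s \<noteq> 0" "t \<noteq> 0" "t \<noteq> s"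
  shows "(\<Sum>A\<in>Q s w. A *v t) = 0"
proof -
  have "(\<Sum>A\<in>Q s w. A *v t) = (\<Sum>y\<in>UNIV. y)"
    by (rule sum.reindex_bij_betw[OF Q_bij]) (use assms in auto)
  then show ?thesis using sum_V by simp
qed

lemma sum_Q:
  assumes "s \<noteq> 0"
  shows "(\<Sum>A\<in>Q s w. A) = 0"
proof -
  have "(\<Sum>A\<in>Q s w. A) *v x = 0 *v x" for x
  proof -
    have "(\<Sum>A\<in>Q s w. A) *v x = (\<Sum>A\<in>Q s w. A *v x)" by (rule sum_mat_vec)
    also have "\<dots> = 0"
    proof (cases "x = 0")
      case True then show ?thesis by simp
    next
      case x0: False
      show ?thesis
      proof (cases "x = s")
        case True
        have "(\<Sum>A\<in>Q s w. A *v x) = (\<Sum>A\<in>Q s w. w)"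
          by (rule sum.cong) (auto simp: Q_def True)
        also have "\<dots> = 0"
        proof (rule sum_const_char2[OF vadd finQ])
          show "even (card (Q s w))" using card_Q[OF assms] n2 by simp
        qed
        finally show ?thesis .
      next
        case False
        then show ?thesis using sum_Q_apply[OF assms x0] by simp
      qed
    qed
    finally show ?thesis by simp
  qed
  then show ?thesis by (simp add: matrix_eq)
qed

lemma hole_nz: "hole A \<Longrightarrow> A \<noteq> 0"
  using other_vec[of 0] unfolding hole_def by auto

lemma hole_app: "hole A \<Longrightarrow> s \<noteq> 0 \<Longrightarrow> A *v s \<noteq> 0"
  unfolding hole_def by blast

lemma nonhole: "A \<in> C \<Longrightarrow> \<not> hole A \<Longrightarrow> \<exists>x. x \<noteq> 0 \<and> A *v x = 0"
  unfolding hole_def by blast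

lemma card_Us: assumes "s \<noteq> 0" shows "card (Us s) = 2 ^ CARD('n) - 2"
proof -
  have "Us s = UNIV - {0, s}" by (auto simp: Us_def)
  then have "card (Us s) = card (UNIV::('f^'n) set) - card {0, s}"
    by (simp add: card_Diff_subset)
  then show ?thesis using assms cardV by simp
qed

lemma holes_Q:
  assumes s: "s \<noteq> 0" and w: "w \<noteq> 0"
  shows "\<exists>h1 h2. h1 \<noteq> h2 \<and> {A. hole A \<and> A *v s = w} = {h1, h2} \<and> h1 + h2 = dl s w"
proof -
  define H where "H = {A \<in> Q s w. hole A}"
  define Sg where "Sg = {A \<in> Q s w. \<not> hole A}"
  have Sg_eq: "Sg = (\<lambda>u. kk s u w) ` Us s"
  proof (rule set_eqI, rule iffI)
    fix A assume "A \<in> Sg"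
    then have A: "A \<in> C" "A *v s = w" "\<not> hole A" by (auto simp: Sg_def Q_def)
    then obtain u where u: "u \<noteq> 0" "A *v u = 0" using nonhole by blast
    have "u \<noteq> s" using u A(2) w by auto
    then have "A = kk s u w" using kk(4)[OF s u(1)] A u by blast
    then show "A \<in> (\<lambda>u. kk s u w) ` Us s" using u \<open>u \<noteq> s\<close> by (auto simp: Us_def)
  next
    fix A assume "A \<in> (\<lambda>u. kk s u w) ` Us s"
    then obtain u where u: "u \<noteq> 0" "u \<noteq> s" "A = kk s u w" by (auto simp: Us_def)
    then have "A \<in> C" "A *v s = w" "A *v u = 0" using kk[OF s u(1) u(2)] by auto
    then show "A \<in> Sg" using u(1) by (auto simp: Sg_def Q_def hole_def)
  qed
  have inj: "inj_on (\<lambda>u. kk s u w) (Us s)"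
  proof (rule inj_onI)
    fix u u' assume uu: "u \<in> Us s" "u' \<in> Us s" "kk s u w = kk s u' w"
    have u: "u \<noteq> 0" "u \<noteq> s" and u': "u' \<noteq> 0" "u' \<noteq> s" using uu by (auto simp: Us_def)
    have k: "kk s u w \<in> C" "kk s u w *v u = 0" "kk s u w *v s = w" using kk[OF s u] by auto
    have "kk s u w *v u' = 0" using kk(3)[OF s u'] uu(3) by simp
    have "kk s u w \<noteq> 0" using k(3) w by auto
    then show "u = u'"
      using twokill[OF k(1) k(2) \<open>kk s u w *v u' = 0\<close> u(1) u'(1)] by blast
  qed
  have cSg: "card Sg = 2 ^ CARD('n) - 2"
    using card_image[OF inj] card_Us[OF s] Sg_eq by simp
  have QHS: "Q s w = H \<union> Sg" "H \<inter> Sg = {}" by (auto simp: H_def Sg_def)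
  have finH: "finite H" and finS: "finite Sg" using finQ by (auto simp: H_def Sg_def)
  have "card (Q s w) = card H + card Sg" using QHS card_Un_disjoint[OF finH finS] by simp
  moreover have "(2::nat) ^ CARD('n) \<ge> 2"
  proof -
    have "(2::nat) ^ CARD('n) \<ge> 2 ^ 2" using n2 by (intro power_increasing) auto
    then show ?thesis by simp
  qed
  ultimately have cH: "card H = 2" using card_Q[OF s] cSg by simp
  then obtain h1 h2 where h: "H = {h1, h2}" "h1 \<noteq> h2" by (auto simp: card_2_iff)
  have "0 = (\<Sum>A\<in>Q s w. A)" using sum_Q[OF s] by simp
  also have "\<dots> = (\<Sum>A\<in>H. A) + (\<Sum>A\<in>Sg. A)"
    using QHS sum.union_disjoint[OF finH finS] by simp
  also have "(\<Sum>A\<in>Sg. A) = dl s w"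
    unfolding Sg_eq dl_def by (simp add: sum.reindex[OF inj])
  also have "(\<Sum>A\<in>H. A) = h1 + h2" using h by simp
  finally have "h1 + h2 = dl s w" by (metis mcancel)
  moreover have "{A. hole A \<and> A *v s = w} = H" by (auto simp: H_def Q_def hole_def)
  ultimately show ?thesis using h by blast
qed

end



context mrd begin

definition sg where "sg s A = A + dl s (A *v s)"

lemma sg_facts:
  assumes A: "hole A" and s: "s \<noteq> 0"
  shows "hole (sg s A)" "sg s A \<noteq> A" "sg s A *v s = A *v s"
    "\<And>B. hole B \<Longrightarrow> B *v s = A *v s \<Longrightarrow> B = A \<or> B = sg s A"
proof -
  have w: "A *v s \<noteq> 0" using hole_app[OF A s] .
  obtain h1 h2 where h: "h1 \<noteq> h2" "{B. hole B \<and> B *v s = A *v s} = {h1, h2}" "h1 + h2 = dl s (A *v s)"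
    using holes_Q[OF s w] by blast
  have "A \<in> {h1, h2}" using h(2) A by blast
  then have sgA: "(A = h1 \<and> sg s A = h2) \<or> (A = h2 \<and> sg s A = h1)"
  proof
    assume "A = h1"
    then show ?thesis unfolding sg_def h(3)[symmetric] using madd_assoc_cancel(1)[of h1 h2] by simp
  next
    assume "A \<in> {h2}"
    then have "A = h2" by simp
    then show ?thesis unfolding sg_def h(3)[symmetric] add.commute[of h1 h2]
      using madd_assoc_cancel(1)[of h2 h1] by simp
  qed
  have mem: "sg s A \<in> {B. hole B \<and> B *v s = A *v s}" using sgA h(2) by auto
  show "hole (sg s A)" "sg s A *v s = A *v s" using mem by auto
  show "sg s A \<noteq> A" using sgA h(1) by auto
  show "\<And>B. hole B \<Longrightarrow> B *v s = A *v s \<Longrightarrow> B = A \<or> B = sg s A"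
  proof -
    fix B assume "hole B" "B *v s = A *v s"
    then have "B \<in> {h1, h2}" using h(2) by blast
    then show "B = A \<or> B = sg s A" using sgA by auto
  qed
qed

lemma dl_nz: assumes "s \<noteq> 0" "w \<noteq> 0" shows "dl s w \<noteq> 0"
proof -
  obtain h1 h2 where h: "h1 \<noteq> h2" "h1 + h2 = dl s w" using holes_Q[OF assms] by blast
  then show ?thesis by (metis mcancel)
qed

lemma holeC: "hole A \<Longrightarrow> A \<in> C" unfolding hole_def by blast

lemma key:
  assumes A: "hole A" and B: "hole B" and D: "hole (A + B)" and s: "s \<noteq> 0"
  shows "\<not> hole (sg s A + B)"
proof
  assume E: "hole (sg s A + B)"
  define D' where "D' = A + B"
  have Eeq: "sg s A + B = D' + dl s (A *v s)"
    unfolding sg_def D'_def by (simp add: add.commute add.left_commute)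
  have Es: "(sg s A + B) *v s = D' *v s"
    unfolding matrix_vector_mult_add_rdistrib sg_facts(3)[OF A s] D'_def ..
  have "sg s A + B = D' \<or> sg s A + B = sg s D'"
    using sg_facts(4)[OF D[folded D'_def] s E Es] .
  then show False
  proof
    assume "sg s A + B = D'"
    then have "dl s (A *v s) = 0" unfolding Eeq by (metis add_cancel_right_right)
    then show False using dl_nz[OF s hole_app[OF A s]] by simp
  next
    assume "sg s A + B = sg s D'"
    moreover have "sg s D' = D' + dl s (D' *v s)" by (rule sg_def)
    ultimately have "D' + dl s (A *v s) = D' + dl s (D' *v s)" using Eeq by metis
    then have "dl s (A *v s) = dl s (D' *v s)" by (rule add_left_imp_eq)
    then have "dl s (A *v s + D' *v s) = 0" by (simp add: dl_add[OF s])
    moreover have "A *v s + D' *v s = B *v s"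
      unfolding D'_def matrix_vector_mult_add_rdistrib by (simp add: vadd_assoc_cancel)
    ultimately show False using dl_nz[OF s hole_app[OF B s]] by simp
  qed
qed

definition XX where "XX A = {B. hole B \<and> B \<noteq> A \<and> \<not> hole (A + B)}"

lemma XX_eq:
  assumes A: "hole A"
  shows "XX A = (\<lambda>s. sg s A) ` (UNIV - {0})"
proof (rule set_eqI, rule iffI)
  fix B assume "B \<in> XX A"
  then have B: "hole B" "B \<noteq> A" "\<not> hole (A + B)" by (auto simp: XX_def)
  obtain x where x: "x \<noteq> 0" "(A + B) *v x = 0"
    using nonhole[OF addC[OF holeC[OF A] holeC[OF B(1)]] B(3)] by blast
  then have "B *v x = A *v x" unfolding matrix_vector_mult_add_rdistrib by (simp add: vcancel)
  then have "B = sg x A" using sg_facts(4)[OF A x(1) B(1)] B(2) by blast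
  then show "B \<in> (\<lambda>s. sg s A) ` (UNIV - {0})" using x(1) by blast
next
  fix B assume "B \<in> (\<lambda>s. sg s A) ` (UNIV - {0})"
  then obtain s where s: "s \<noteq> 0" "B = sg s A" by blast
  have "(A + B) *v s = 0" unfolding s(2) matrix_vector_mult_add_rdistrib sg_facts(3)[OF A s(1)] by simp
  then have "\<not> hole (A + B)" using s(1) unfolding hole_def by blast
  then show "B \<in> XX A" using sg_facts(1,2)[OF A s(1)] s(2) by (auto simp: XX_def)
qed

lemma XX_card:
  assumes A: "hole A"
  shows "card (XX A) = 2 ^ CARD('n) - 1"
proof -
  have inj: "inj_on (\<lambda>s. sg s A) (UNIV - {0})"
  proof (rule inj_onI)
    fix s t assume st: "s \<in> UNIV - {0}" "t \<in> UNIV - {0}" "sg s A = sg t A"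
    have s: "s \<noteq> 0" and t: "t \<noteq> 0" using st by auto
    define E where "E = A + sg s A"
    have EC: "E \<in> C" unfolding E_def by (rule addC[OF holeC[OF A] holeC[OF sg_facts(1)[OF A s]]])
    have Es: "E *v s = 0" unfolding E_def matrix_vector_mult_add_rdistrib sg_facts(3)[OF A s] by simp
    have Et: "E *v t = 0" unfolding E_def st(3) matrix_vector_mult_add_rdistrib sg_facts(3)[OF A t] by simp
    have "E \<noteq> 0" unfolding E_def using sg_facts(2)[OF A s] by (metis mcancel)
    then show "s = t" using twokill[OF EC Es Et s t] by blast
  qed
  have "card (UNIV - {0::'f^'n}) = 2 ^ CARD('n) - 1"
    using F2 by (simp add: card_Diff_subset)
  then show ?thesis using card_image[OF inj] XX_eq[OF A] by simp
qed

lemma XX_sym: assumes "hole A" "hole B" shows "B \<in> XX A \<longleftrightarrow> A \<in> XX B"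
proof -
  have c: "A + B = B + A" by (rule add.commute)
  show "B \<in> XX A \<longleftrightarrow> A \<in> XX B" unfolding XX_def mem_Collect_eq c using assms by blast
qed

lemma XX_sub:
  assumes A: "hole A" and B: "hole B" and AB: "hole (A + B)"
  shows "XX A \<subseteq> XX B"
proof
  fix P assume "P \<in> XX A"
  then obtain s where s: "s \<noteq> 0" "P = sg s A" using XX_eq[OF A] by blast
  have hP: "hole P" using sg_facts(1)[OF A s(1)] s(2) by simp
  have "P \<noteq> B"
  proof
    assume "P = B"
    then have "\<not> hole (A + B)" using \<open>P \<in> XX A\<close> by (simp add: XX_def)
    then show False using AB by simp
  qed
  moreover have "\<not> hole (B + P)" using key[OF A B AB s(1)] s(2) by (simp add: add.commute)
  ultimately show "P \<in> XX B" using hP by (simp add: XX_def)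
qed

lemma XX_eqB:
  assumes A: "hole A" and B: "hole B" and AB: "hole (A + B)"
  shows "XX A = XX B"
proof -
  have "hole (B + A)" using AB by (metis add.commute)
  then show ?thesis using XX_sub[OF A B AB] XX_sub[OF B A] by blast
qed

lemma holes_card: "card {A. hole A} = 2 * (2 ^ CARD('n) - 1)"
proof -
  obtain s0 :: "'f^'n" where s0: "s0 \<noteq> 0" using other_vec by blast
  define F where "F w = {A. hole A \<and> A *v s0 = w}" for w
  have eq: "{A. hole A} = (\<Union>w\<in>UNIV - {0}. F w)"
  proof (rule set_eqI, rule iffI)
    fix A assume "A \<in> {A. hole A}"
    then have "hole A" by simp
    then have "A *v s0 \<noteq> 0" "A \<in> F (A *v s0)" using hole_app[OF _ s0] by (auto simp: F_def)
    then show "A \<in> (\<Union>w\<in>UNIV - {0}. F w)" by blast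
  qed (auto simp: F_def)
  have cF: "card (F w) = 2" if "w \<in> UNIV - {0}" for w
  proof -
    have "w \<noteq> 0" using that by simp
    from holes_Q[OF s0 this] obtain h1 h2 where "h1 \<noteq> h2" "{A. hole A \<and> A *v s0 = w} = {h1, h2}"
      by metis
    then show ?thesis unfolding F_def by simp
  qed
  have finF: "finite (F w)" for w
    using finC by (rule finite_subset[rotated]) (auto simp: F_def hole_def)
  have "card {A. hole A} = (\<Sum>w\<in>UNIV - {0}. card (F w))"
    unfolding eq
  proof (rule card_UN_disjoint)
    show "finite (UNIV - {0::'f^'n})" using finV by simp
    show "\<forall>i\<in>UNIV - {0}. finite (F i)" using finF by blast
    show "\<forall>i\<in>UNIV - {0}. \<forall>j\<in>UNIV - {0}. i \<noteq> j \<longrightarrow> F i \<inter> F j = {}"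
      unfolding F_def by blast
  qed
  also have "\<dots> = (\<Sum>w\<in>UNIV - {0::'f^'n}. 2)" by (rule sum.cong[OF refl cF])
  also have "\<dots> = 2 * (2 ^ CARD('n) - 1)"
    using F2 by (simp add: card_Diff_subset)
  finally show ?thesis .
qed

end



context mrd begin

definition good where
  "good S \<longleftrightarrow> (\<forall>P\<in>S. \<forall>R\<in>S. P + R \<in> S) \<and> 0 \<in> S \<and> (\<forall>P\<in>S. P \<noteq> 0 \<longrightarrow> hole P)
     \<and> card S = 2 ^ CARD('n)"

lemma good_add: "good S \<Longrightarrow> P \<in> S \<Longrightarrow> R \<in> S \<Longrightarrow> P + R \<in> S"
  unfolding good_def by blast
lemma good_hole: "good S \<Longrightarrow> P \<in> S \<Longrightarrow> P \<noteq> 0 \<Longrightarrow> hole P"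
  unfolding good_def by blast
lemma good_card: "good S \<Longrightarrow> card S = 2 ^ CARD('n)"
  unfolding good_def by blast

lemma good_C: assumes "good S" shows "S \<subseteq> C"
proof
  fix P assume P: "P \<in> S"
  show "P \<in> C"
  proof (cases "P = 0")
    case True then show ?thesis using zeroC by simp
  next
    case False
    then have "hole P" using assms P unfolding good_def by blast
    then show ?thesis by (rule holeC)
  qed
qed

lemma good_bij:
  assumes g: "good S" and s0: "s0 \<noteq> 0"
  shows "bij_betw (\<lambda>A. A *v s0) S UNIV"
proof -
  have inj: "inj_on (\<lambda>A. A *v s0) S"
  proof (rule inj_onI)
    fix A B assume AB: "A \<in> S" "B \<in> S" "A *v s0 = B *v s0"
    have cl: "\<forall>P\<in>S. \<forall>R\<in>S. P + R \<in> S" and hl: "\<forall>P\<in>S. P \<noteq> 0 \<longrightarrow> hole P"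
      using g unfolding good_def by blast+
    have m: "A + B \<in> S" using cl AB by blast
    have z: "(A + B) *v s0 = 0" unfolding matrix_vector_mult_add_rdistrib AB(3) by (rule vadd)
    have "A + B = 0"
    proof (rule ccontr)
      assume "A + B \<noteq> 0"
      then have "hole (A + B)" using hl m by blast
      then show False using hole_app[OF _ s0] z by blast
    qed
    then show "A = B" by (simp only: mcancel)
  qed
  have cS: "card S = 2 ^ CARD('n)" using g unfolding good_def by blast
  have "card ((\<lambda>A. A *v s0) ` S) = card (UNIV :: ('f^'n) set)"
    unfolding card_image[OF inj] cS cardV ..
  then have "(\<lambda>A. A *v s0) ` S = UNIV" by (intro card_subset_eq finV) auto
  then show ?thesis using inj by (simp add: bij_betw_def)
qed

definition phi where "phi S s0 a = the_inv_into S (\<lambda>A. A *v s0) a"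

lemma phi:
  assumes g: "good S" and s0: "s0 \<noteq> 0"
  shows "phi S s0 a \<in> S" "phi S s0 a *v s0 = a" "\<And>A. A \<in> S \<Longrightarrow> phi S s0 (A *v s0) = A"
proof -
  have b: "bij_betw (\<lambda>A. A *v s0) S UNIV" by (rule good_bij[OF g s0])
  show "phi S s0 a \<in> S" unfolding phi_def
    using bij_betw_apply[OF bij_betw_the_inv_into[OF b]] by simp
  show "phi S s0 a *v s0 = a" unfolding phi_def
    using f_the_inv_into_f_bij_betw[OF b] by simp
  show "\<And>A. A \<in> S \<Longrightarrow> phi S s0 (A *v s0) = A" unfolding phi_def
    using the_inv_into_f_f[OF bij_betw_imp_inj_on[OF b]] by blast
qed

lemma phi_add:
  assumes g: "good S" and s0: "s0 \<noteq> 0"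
  shows "phi S s0 (a + b) = phi S s0 a + phi S s0 b"
proof -
  have m: "phi S s0 a + phi S s0 b \<in> S" using good_add[OF g phi(1)[OF g s0] phi(1)[OF g s0]] .
  have "(phi S s0 a + phi S s0 b) *v s0 = a + b"
    unfolding matrix_vector_mult_add_rdistrib phi(2)[OF g s0] ..
  then show ?thesis using phi(3)[OF g s0 m] by simp
qed

lemma phi_presemi:
  assumes g: "good S" and s0: "s0 \<noteq> 0"
  shows "presemifield (\<lambda>a x. phi S s0 a *v x)"
  unfolding presemifield_def
proof (intro conjI allI impI)
  fix x y z :: "'f^'n"
  show "phi S s0 (x + y) *v z = phi S s0 x *v z + phi S s0 y *v z"
    unfolding phi_add[OF g s0] matrix_vector_mult_add_rdistrib ..
  show "phi S s0 x *v (y + z) = phi S s0 x *v y + phi S s0 x *v z"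
    by (rule matrix_vector_right_distrib)
next
  fix x y :: "'f^'n"
  assume e: "phi S s0 x *v y = 0"
  show "x = 0 \<or> y = 0"
  proof (cases "x = 0")
    case False
    then have "phi S s0 x \<noteq> 0" using phi(2)[OF g s0, of x] by auto
    then have "hole (phi S s0 x)" using good_hole[OF g phi(1)[OF g s0]] by blast
    then show ?thesis using e unfolding hole_def by blast
  qed simp
qed

lemma two_good: "\<exists>S1 S2. good S1 \<and> good S2 \<and> S1 \<inter> S2 = {0}"
proof -
  have "(2::nat) ^ CARD('n) \<ge> 2 ^ 2" using n2 by (intro power_increasing) auto
  then have "card {A. hole A} \<noteq> 0" using holes_card by simp
  then obtain A0 where A0: "hole A0" by (metis Collect_empty_eq card.empty)
  define H where "H = {A. hole A}"
  have finH: "finite H" unfolding H_def using finC by (rule finite_subset[rotated]) (auto simp: hole_def)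
  define S1s where "S1s = H - XX A0"
  define S2s where "S2s = XX A0"
  have XXH: "XX P \<subseteq> H" for P unfolding XX_def H_def by blast
  have finXX: "finite (XX P)" for P using finH XXH by (rule finite_subset[rotated])
  have cS1s: "card S1s = 2 ^ CARD('n) - 1"
  proof -
    define m where "m = (2::nat) ^ CARD('n) - 1"
    have "card S1s = card H - card (XX A0)" unfolding S1s_def by (rule card_Diff_subset[OF finXX XXH])
    also have "\<dots> = 2 * m - m" unfolding H_def holes_card XX_card[OF A0] m_def ..
    also have "\<dots> = m" by simp
    finally show ?thesis unfolding m_def .
  qed
  have S1H: "S1s \<subseteq> H" unfolding S1s_def by blast
  have S1X: "XX B = XX A0" if "B \<in> S1s" for B
  proof -
    have B: "hole B" "B \<notin> XX A0" using that by (auto simp: S1s_def H_def)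
    then have "B = A0 \<or> hole (A0 + B)" unfolding XX_def by blast
    then show ?thesis using XX_eqB[OF A0 B(1)] by blast
  qed
  have S2X: "XX P = S1s" if "P \<in> S2s" for P
  proof -
    have P: "hole P" using that XXH by (auto simp: S2s_def H_def)
    have sub: "S1s \<subseteq> XX P"
    proof
      fix B assume B: "B \<in> S1s"
      then have "P \<in> XX B" using S1X[OF B] that by (simp add: S2s_def)
      moreover have "hole B" using B S1H by (auto simp: H_def)
      ultimately show "B \<in> XX P" using XX_sym[OF P] by blast
    qed
    have "card (XX P) = card S1s" using XX_card[OF P] cS1s by simp
    then show ?thesis using card_subset_eq[OF finXX sub] by simp
  qed
  have nz: "0 \<notin> H" using hole_nz by (auto simp: H_def)
  define S1 where "S1 = insert 0 S1s"
  define S2 where "S2 = insert 0 S2s"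
  have c2: "hole (P + R)" if "hole P" "hole R" "R \<noteq> P" "R \<notin> XX P" for P R
    using that unfolding XX_def by blast
  have notX: "P + R \<notin> XX P" if "hole R" for P R
    using that madd_assoc_cancel(1)[of P R] unfolding XX_def by simp
  have g1: "good S1"
    unfolding good_def
  proof (intro conjI ballI impI)
    fix P R assume PR: "P \<in> S1" "R \<in> S1"
    show "P + R \<in> S1"
    proof (cases "P = 0 \<or> R = 0 \<or> P = R")
      case True then show ?thesis using PR by (auto simp: S1_def)
    next
      case False
      then have P: "P \<in> S1s" and R: "R \<in> S1s" and "P \<noteq> R" using PR by (auto simp: S1_def)
      have hP: "hole P" and hR: "hole R" using P R S1H by (auto simp: H_def)
      have "R \<notin> XX P" using R S1X[OF P] by (simp add: S1s_def)
      then have h: "hole (P + R)" using c2[OF hP hR] \<open>P \<noteq> R\<close> by blast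
      have "P + R \<notin> XX A0" using notX[OF hR, of P] S1X[OF P] by simp
      then show ?thesis using h by (simp add: S1_def S1s_def H_def)
    qed
  next
    show "0 \<in> S1" by (simp add: S1_def)
  next
    fix P assume "P \<in> S1" "P \<noteq> 0"
    then show "hole P" using S1H by (auto simp: S1_def H_def)
  next
    show "card S1 = 2 ^ CARD('n)"
      using cS1s nz S1H finH n2 unfolding S1_def
      by (subst card_insert_disjoint) (auto intro: finite_subset)
  qed
  have g2: "good S2"
    unfolding good_def
  proof (intro conjI ballI impI)
    fix P R assume PR: "P \<in> S2" "R \<in> S2"
    show "P + R \<in> S2"
    proof (cases "P = 0 \<or> R = 0 \<or> P = R")
      case True then show ?thesis using PR by (auto simp: S2_def)
    next
      case False
      then have P: "P \<in> S2s" and R: "R \<in> S2s" and "P \<noteq> R" using PR by (auto simp: S2_def)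
      have hP: "hole P" and hR: "hole R" using P R XXH by (auto simp: S2s_def H_def)
      have "R \<notin> S1s" using R by (simp add: S1s_def S2s_def)
      then have "R \<notin> XX P" using S2X[OF P] by simp
      then have h: "hole (P + R)" using c2[OF hP hR] \<open>P \<noteq> R\<close> by blast
      have "P + R \<notin> S1s" using notX[OF hR, of P] S2X[OF P] by simp
      then have "P + R \<in> S2s" using h by (simp add: S1s_def S2s_def H_def)
      then show ?thesis by (simp add: S2_def)
    qed
  next
    show "0 \<in> S2" by (simp add: S2_def)
  next
    fix P assume "P \<in> S2" "P \<noteq> 0"
    then show "hole P" using XXH by (auto simp: S2_def S2s_def H_def)
  next
    have "0 \<notin> S2s" using nz XXH by (auto simp: S2s_def)
    then show "card S2 = 2 ^ CARD('n)"
      using XX_card[OF A0] finXX n2 unfolding S2_def S2s_def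
      by (subst card_insert_disjoint) auto
  qed
  have "S1 \<inter> S2 = {0}" by (auto simp: S1_def S2_def S1s_def S2s_def)
  then show ?thesis using g1 g2 by blast
qed

lemma decomp:
  assumes g1: "good S1" and g2: "good S2" and i: "S1 \<inter> S2 = {0}" and A: "A \<in> C"
  shows "\<exists>P\<in>S1. \<exists>R\<in>S2. A = P + R"
proof -
  define f where "f = (\<lambda>x::('f^'n^'n) \<times> ('f^'n^'n). fst x + snd x)"
  have inj: "inj_on f (S1 \<times> S2)"
  proof (rule inj_onI)
    fix x y assume xy: "x \<in> S1 \<times> S2" "y \<in> S1 \<times> S2" "f x = f y"
    obtain P R where x: "x = (P, R)" by (cases x)
    obtain P' R' where y: "y = (P', R')" by (cases y)
    have m: "P \<in> S1" "R \<in> S2" "P' \<in> S1" "R' \<in> S2" using xy x y by auto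
    have e: "P + R = P' + R'" using xy(3) x y by (simp add: f_def)
    have "P + P' + (R + R') = (P + R) + (P' + R')" by (simp only: add_ac)
    also have "\<dots> = 0" unfolding e by (rule madd)
    finally have "P + P' = R + R'" by (simp only: mcancel)
    moreover have "P + P' \<in> S1" using good_add[OF g1 m(1) m(3)] .
    moreover have "R + R' \<in> S2" using good_add[OF g2 m(2) m(4)] .
    ultimately have "P + P' \<in> S1 \<inter> S2" by simp
    then have "P + P' = 0" unfolding i by simp
    then have "P = P'" by (simp only: mcancel)
    then have "R = R'" using e by simp
    then show "x = y" using x y \<open>P = P'\<close> by simp
  qed
  have sub: "f ` (S1 \<times> S2) \<subseteq> C"
  proof
    fix X assume "X \<in> f ` (S1 \<times> S2)"
    then obtain P R where "P \<in> S1" "R \<in> S2" "X = P + R" by (auto simp: f_def)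
    then show "X \<in> C" using good_C[OF g1] good_C[OF g2] addC by blast
  qed
  have "card (f ` (S1 \<times> S2)) = card S1 * card S2"
    unfolding card_image[OF inj] by (rule card_cartesian_product)
  also have "\<dots> = card C" unfolding good_card[OF g1] good_card[OF g2] card
    by (simp add: power_add[symmetric] mult_2)
  finally have "f ` (S1 \<times> S2) = C" using card_subset_eq[OF finC sub] by simp
  then have "A \<in> f ` (S1 \<times> S2)" using A by simp
  then obtain x where "x \<in> S1 \<times> S2" "A = f x" by blast
  then obtain P R where "P \<in> S1" "R \<in> S2" "A = P + R" by (cases x) (auto simp: f_def)
  then show ?thesis by blast
qed

lemma hole_invertible: "hole A \<Longrightarrow> invertible A"
  unfolding hole_def invertible_left_inverse matrix_left_invertible_ker by blast

lemma final:
  "(\<exists>(star :: 'f ^ 'n \<Rightarrow> 'f ^ 'n \<Rightarrow> 'f ^ 'n) (circ :: 'f ^ 'n \<Rightarrow> 'f ^ 'n \<Rightarrow> 'f ^ 'n).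
            presemifield star \<and> presemifield circ \<and>
            (\<lambda>A. (\<lambda>x. A *v x)) ` C = {(\<lambda>x. star a x - circ b x) | a b. True})
       \<and> (\<exists>C' \<subseteq> C. additively_closed C' \<and> card C' = 2 ^ CARD('n) \<and>
            (\<forall>A\<in>C'. A \<noteq> 0 \<longrightarrow> invertible A))"
proof -
  obtain S1 S2 where g1: "good S1" and g2: "good S2" and i: "S1 \<inter> S2 = {0}"
    using two_good by blast
  obtain s0 :: "'f^'n" where s0: "s0 \<noteq> 0" using other_vec by blast
  define star where "star = (\<lambda>a x. phi S1 s0 a *v x)"
  define circ where "circ = (\<lambda>b x. phi S2 s0 b *v x)"
  have sc: "star a x - circ b x = (phi S1 s0 a + phi S2 s0 b) *v x" for a b x
    unfolding star_def circ_def vminus(2) matrix_vector_mult_add_rdistrib ..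
  have img: "(\<lambda>A. (\<lambda>x. A *v x)) ` C = {(\<lambda>x. star a x - circ b x) | a b. True}"
  proof (rule set_eqI, rule iffI)
    fix F assume "F \<in> (\<lambda>A. (\<lambda>x. A *v x)) ` C"
    then obtain A where A: "A \<in> C" "F = (\<lambda>x. A *v x)" by blast
    obtain P R where PR: "P \<in> S1" "R \<in> S2" "A = P + R" using decomp[OF g1 g2 i A(1)] by blast
    have "F = (\<lambda>x. star (P *v s0) x - circ (R *v s0) x)"
      unfolding sc phi(3)[OF g1 s0 PR(1)] phi(3)[OF g2 s0 PR(2)] A(2) PR(3) ..
    then show "F \<in> {(\<lambda>x. star a x - circ b x) | a b. True}" by blast
  next
    fix F assume "F \<in> {(\<lambda>x. star a x - circ b x) | a b. True}"
    then obtain a b where F: "F = (\<lambda>x. star a x - circ b x)" by blast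
    have "phi S1 s0 a + phi S2 s0 b \<in> C"
      using addC good_C[OF g1] good_C[OF g2] phi(1)[OF g1 s0] phi(1)[OF g2 s0] by blast
    moreover have "F = (\<lambda>x. (phi S1 s0 a + phi S2 s0 b) *v x)" unfolding F sc ..
    ultimately show "F \<in> (\<lambda>A. (\<lambda>x. A *v x)) ` C" by blast
  qed
  have p1: "presemifield star" unfolding star_def by (rule phi_presemi[OF g1 s0])
  have p2: "presemifield circ" unfolding circ_def by (rule phi_presemi[OF g2 s0])
  have "S1 \<subseteq> C" "additively_closed S1" "card S1 = 2 ^ CARD('n)"
      "\<forall>A\<in>S1. A \<noteq> 0 \<longrightarrow> invertible A"
    using good_C[OF g1] good_add[OF g1] good_card[OF g1] good_hole[OF g1] hole_invertible
    unfolding additively_closed_def by blast+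
  then show ?thesis using p1 p2 img by blast
qed

end


theorem mainTheorem1:
  fixes C :: "('f::field ^ 'n ^ 'n) set"
  assumes F2: "CARD('f) = 2"
    and add: "additively_closed C"
    and card: "card C = 2 ^ (2 * CARD('n))"
    and rk: "\<forall>A\<in>C. A \<noteq> 0 \<longrightarrow> rank A \<ge> CARD('n) - 1"
  shows "(\<exists>(star :: 'f ^ 'n \<Rightarrow> 'f ^ 'n \<Rightarrow> 'f ^ 'n) (circ :: 'f ^ 'n \<Rightarrow> 'f ^ 'n \<Rightarrow> 'f ^ 'n).
            presemifield star \<and> presemifield circ \<and>
            (\<lambda>A. (\<lambda>x. A *v x)) ` C = {(\<lambda>x. star a x - circ b x) | a b. True})
       \<and> (\<exists>C' \<subseteq> C. additively_closed C' \<and> card C' = 2 ^ CARD('n) \<and>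
            (\<forall>A\<in>C'. A \<noteq> 0 \<longrightarrow> invertible A))"
proof -
  interpret mrd C using F2 add card rk by unfold_locales
  show ?thesis by (rule final)
qed

end
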